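(* Let $n\ge1$, $k\in\{1,\dots,n\}$, scores $s_1,\dots,s_n\in\mathbb{R}$ not all equal, $p=\frac{n-k}{n}+\frac{1}{2n}$ and $f(x)=\sum_{i=1}^n\rho_p(s_i-x)$. If $x\in\mathbb{R}$ satisfies $f(x)-f(\theta_k)\le \frac{g_m\Delta}{2}$, where $g_m=\min\{\overline{m}-\frac12,\ \underline{m}+\frac12\}$, then $|x-\theta_k|\le\frac{\Delta}{2}$.
   Context: The pinball loss is $\rho_p(x)=p\,x$ if $x\ge0$ and $\rho_p(x)=-(1-p)x$ if $x<0$. The scores sorted in descending order are $\theta_1\ge\cdots\ge\theta_n$; $\theta_k$ is the $k$-th largest score. $\overline{m}$ is the number of indices $j\le k$ with $\theta_j=\theta_k$, and $\underline{m}$ is the number of indices $j>k$ with $\theta_j=\theta_k$. The minimum gap is $\Delta=\min\{|s_i-\theta_k|: s_i\ne\theta_k\}$. *)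

theory Defs
  imports Complex_Main
begin

definition pinball :: "real \<Rightarrow> real \<Rightarrow> real" where
  "pinball p x = (if x \<ge> 0 then p * x else - (1 - p) * x)"

text \<open>Scores s_1..s_n are the list s (s_i = s ! (i-1)). The sorted scores in
  descending order: theta_1 \<ge> ... \<ge> theta_n; theta_j = desc s ! (j-1).\<close>
definition desc :: "real list \<Rightarrow> real list" where
  "desc s = rev (sort s)"

definition theta :: "real list \<Rightarrow> nat \<Rightarrow> real" where
  "theta s j = desc s ! (j - 1)"

definition mbar :: "real list \<Rightarrow> nat \<Rightarrow> nat" where
  "mbar s k = card {j \<in> {1..k}. theta s j = theta s k}"

definition munder :: "real list \<Rightarrow> nat \<Rightarrow> nat" where
  "munder s k = card {j \<in> {k+1..length s}. theta s j = theta s k}"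

definition gap :: "real list \<Rightarrow> nat \<Rightarrow> real" where
  "gap s k = Min {\<bar>s ! i - theta s k\<bar> | i. i < length s \<and> s ! i \<noteq> theta s k}"

end

theory Submission
  imports Defs "HOL-Library.Multiset"
begin

lemma pin_right:
  assumes "0 \<le> p" "p \<le> 1" "t \<le> x"
  shows "pinball p (a - x) - pinball p (a - t) \<ge> (if a > t then -p else 1-p) * (x - t)"
  using assms unfolding pinball_def
  by (auto simp: algebra_simps)

lemma pin_left:
  assumes "0 \<le> p" "p \<le> 1" "x \<le> t"
  shows "pinball p (a - x) - pinball p (a - t) \<ge> (if a \<ge> t then -p else 1-p) * (x - t)"
  using assms unfolding pinball_def
  by (auto simp: algebra_simps)

lemma card_shift: "card {j\<in>{1..(n::nat)}. Q (j-1)} = card {i. i<n \<and> Q i}"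
proof -
  have "{j\<in>{1..n}. Q (j-1)} = Suc ` {i. i<n \<and> Q i}"
  proof
    show "Suc ` {i. i<n \<and> Q i} \<subseteq> {j\<in>{1..n}. Q (j-1)}" by auto
    show "{j\<in>{1..n}. Q (j-1)} \<subseteq> Suc ` {i. i<n \<and> Q i}"
    proof
      fix j assume j: "j \<in> {j\<in>{1..n}. Q (j-1)}"
      hence "j = Suc (j-1)" "j - 1 \<in> {i. i<n \<and> Q i}" by auto
      thus "j \<in> Suc ` {i. i<n \<and> Q i}" by (metis imageI)
    qed
  qed
  thus ?thesis by (simp add: card_image)
qed

lemma card_perm:
  assumes "mset xs = mset ys"
  shows "card {i. i<length xs \<and> P (xs!i)} = card {i. i<length ys \<and> P (ys!i)}"
proof -
  have "length (filter P xs) = length (filter P ys)"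
    by (metis assms mset_filter size_mset)
  thus ?thesis by (simp add: length_filter_conv_card)
qed

lemma sum_ind:
  fixes a b :: real
  shows "(\<Sum>i<n. if P i then a else b) = a * card {i. i<n \<and> P i} + b * (n - card {i. i<n \<and> P i})"
proof -
  have "(\<Sum>i<n. if P i then a else b) = (\<Sum>i<n. b + (a - b) * (if P i then 1 else 0))"
    by (rule sum.cong) auto
  also have "\<dots> = n * b + (a - b) * (\<Sum>i<n. (if P i then 1 else 0))"
    by (simp add: sum.distrib sum_distrib_left)
  also have "(\<Sum>i<n. (if P i then 1 else 0)::real) = card {i. i<n \<and> P i}"
    by (simp add: sum.If_cases lessThan_def Collect_conj_eq)
  moreover have "card {i. i<n \<and> P i} \<le> n"
    by (rule le_trans[OF card_mono[of "{..<n}"]]) auto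
  ultimately show ?thesis by (simp add: algebra_simps of_nat_diff)
qed

theorem corollary1:
  fixes s :: "real list" and k :: nat and x :: real
  assumes "length s \<ge> 1"
    and "1 \<le> k" and "k \<le> length s"
    and "\<exists>i<length s. \<exists>j<length s. s ! i \<noteq> s ! j"
    and "f (x) - f (theta s k) \<le> min (real (mbar s k) - 1/2) (real (munder s k) + 1/2) * gap s k / 2"
    and "p = real (length s - k) / real (length s) + 1 / (2 * real (length s))"
    and "f = (\<lambda>y. \<Sum>i<length s. pinball p (s ! i - y))"
  shows "\<bar>x - theta s k\<bar> \<le> gap s k / 2"
proof -
  define n where "n = length s"
  define d where "d = desc s"
  define t where "t = theta s k"
  have ld: "length d = n" by (simp add: d_def desc_def n_def)
  have md: "mset d = mset s" by (simp add: d_def desc_def)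
  have th: "theta s j = d ! (j-1)" for j by (simp add: theta_def d_def)
  have sd: "i \<le> j \<Longrightarrow> j < n \<Longrightarrow> d ! j \<le> d ! i" for i j
  proof -
    assume a: "i \<le> j" "j < n"
    have "sorted (sort s)" by simp
    moreover have "length (sort s) = n" by (simp add: n_def)
    ultimately show ?thesis using a unfolding d_def desc_def
      by (simp add: rev_nth sorted_nth_mono)
  qed
  have tk: "t = d ! (k-1)" by (simp add: t_def th)
  have n0: "n \<ge> 1" "k \<le> n" using assms n_def by auto
  define G where "G = card {i. i<n \<and> s!i > t}"
  define GE where "GE = card {i. i<n \<and> s!i \<ge> t}"
  have Gd: "card {j\<in>{1..n}. d!(j-1) > t} = G"
    unfolding G_def using card_shift[of n "\<lambda>i. d!i > t"] card_perm[OF md, of "\<lambda>y. y > t"] ld n_def by simp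
  have GEd: "card {j\<in>{1..n}. d!(j-1) \<ge> t} = GE"
    unfolding GE_def using card_shift[of n "\<lambda>i. d!i \<ge> t"] card_perm[OF md, of "\<lambda>y. y \<ge> t"] ld n_def by simp
  have mb1: "mbar s k \<ge> 1"
  proof -
    have "k \<in> {j \<in> {1..k}. theta s j = theta s k}" using assms by auto
    hence "{j \<in> {1..k}. theta s j = theta s k} \<noteq> {}" by blast
    thus ?thesis unfolding mbar_def by (simp add: Suc_le_eq card_gt_0_iff)
  qed
  have mbG: "mbar s k + G \<le> k"
  proof -
    have s1: "{j\<in>{1..n}. d!(j-1) > t} \<subseteq> {1..k}"
    proof
      fix j assume "j \<in> {j\<in>{1..n}. d!(j-1) > t}"
      hence j: "1 \<le> j" "j \<le> n" "d!(j-1) > t" by auto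
      show "j \<in> {1..k}"
      proof (rule ccontr)
        assume "j \<notin> {1..k}"
        hence "k - 1 \<le> j - 1" using j by auto
        hence "d!(j-1) \<le> d!(k-1)" using sd j by auto
        thus False using j tk by auto
      qed
    qed
    have "{j \<in> {1..k}. theta s j = theta s k} \<union> {j\<in>{1..n}. d!(j-1) > t} \<subseteq> {1..k}"
      using s1 by auto
    hence "card ({j \<in> {1..k}. theta s j = theta s k} \<union> {j\<in>{1..n}. d!(j-1) > t}) \<le> k"
      by (metis card_atLeastAtMost card_mono diff_Suc_1 finite_atLeastAtMost)
    moreover have "{j \<in> {1..k}. theta s j = theta s k} \<inter> {j\<in>{1..n}. d!(j-1) > t} = {}"
      using th t_def by auto
    ultimately show ?thesis unfolding mbar_def using Gd
      by (simp add: card_Un_disjoint)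
  qed
  have muGE: "munder s k + k \<le> GE"
  proof -
    have "{j \<in> {k+1..length s}. theta s j = theta s k} \<union> {1..k} \<subseteq> {j\<in>{1..n}. d!(j-1) \<ge> t}"
    proof
      fix j assume "j \<in> {j \<in> {k+1..length s}. theta s j = theta s k} \<union> {1..k}"
      thus "j \<in> {j\<in>{1..n}. d!(j-1) \<ge> t}"
      proof
        assume "j \<in> {j \<in> {k+1..length s}. theta s j = theta s k}"
        thus ?thesis using th t_def n_def by auto
      next
        assume "j \<in> {1..k}"
        hence "j \<ge> 1" "j \<le> k" by auto
        thus ?thesis using sd[of "j-1" "k-1"] tk n0 by auto
      qed
    qed
    moreover have fin: "finite {j\<in>{1..n}. d!(j-1) \<ge> t}" by simp
    ultimately have "card ({j \<in> {k+1..length s}. theta s j = theta s k} \<union> {1..k}) \<le> card {j\<in>{1..n}. d!(j-1) \<ge> t}"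
      by (intro card_mono) auto
    hence "card ({j \<in> {k+1..length s}. theta s j = theta s k} \<union> {1..k}) \<le> GE"
      using GEd by simp
    moreover have "{j \<in> {k+1..length s}. theta s j = theta s k} \<inter> {1..k} = {}" by auto
    ultimately show ?thesis unfolding munder_def by (simp add: card_Un_disjoint)
  qed
  have gpos: "gap s k > 0"
  proof -
    define S where "S = {\<bar>s ! i - theta s k\<bar> | i. i < length s \<and> s ! i \<noteq> theta s k}"
    have fin: "finite S" unfolding S_def by simp
    have ne: "S \<noteq> {}" unfolding S_def using assms(4) by fastforce
    have "\<forall>y\<in>S. y > 0" unfolding S_def by auto
    thus ?thesis using fin ne unfolding gap_def S_def[symmetric] by (simp add: Min_gr_iff)
  qed
  have np: "real n * (1 - p) = real k - 1/2"
    using assms(6) n0 unfolding n_def[symmetric] by (simp add: field_simps of_nat_diff)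
  have p01: "0 \<le> p" "p \<le> 1"
  proof -
    have "real n * p = real n - real k + 1/2"
      using assms(6) n0 unfolding n_def[symmetric] by (simp add: field_simps of_nat_diff)
    moreover have "real n \<ge> 1" using n0 by simp
    moreover have "real k \<ge> 1" "real k \<le> real n" using n0 assms(2) by auto
    ultimately have "real n * p \<le> real n * 1" by linarith
    moreover have "real n > 0" using n0 by simp
    ultimately show "p \<le> 1" by (meson mult_le_cancel_left_pos)
    show "0 \<le> p" using assms(6) by simp
  qed
  define g where "g = min (real (mbar s k) - 1/2) (real (munder s k) + 1/2)"
  have gp: "g > 0" using mb1 g_def by auto
  have fdiff: "f x - f t = (\<Sum>i<n. pinball p (s ! i - x) - pinball p (s ! i - t))"
    using assms(7) n_def by (simp add: sum_subtractf)
  have hyp: "f x - f t \<le> g * gap s k / 2" using assms(5) t_def g_def by simp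
  show ?thesis
  proof (cases "t \<le> x")
    case True
    have "f x - f t \<ge> (\<Sum>i<n. (if s!i > t then -p else 1-p) * (x - t))"
      unfolding fdiff by (rule sum_mono) (rule pin_right[OF p01 True])
    also have "(\<Sum>i<n. (if s!i > t then -p else 1-p) * (x - t)) = (real k - 1/2 - G) * (x - t)"
    proof -
      have Gn: "G \<le> n" unfolding G_def by (rule le_trans[OF card_mono[of "{..<n}"]]) auto
      have "(\<Sum>i<n. (if s!i > t then -p else 1-p)) = -p * G + (1-p) * (n - G)"
        unfolding G_def by (rule sum_ind)
      also have "\<dots> = real n * (1-p) - G" using Gn by (simp add: of_nat_diff algebra_simps)
      finally show ?thesis using np by (simp add: sum_distrib_right[symmetric])
    qed
    finally have lb: "f x - f t \<ge> (real k - 1/2 - G) * (x - t)" .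
    have cg: "g \<le> real k - 1/2 - G" using mbG g_def by auto
    show ?thesis
    proof (rule ccontr)
      assume "\<not> ?thesis"
      hence xt: "x - t > gap s k / 2" using True t_def by auto
      have "g * (gap s k / 2) < g * (x - t)" using gp xt by simp
      also have "\<dots> \<le> (real k - 1/2 - G) * (x - t)" using cg xt gpos
        by (intro mult_right_mono) auto
      finally show False using lb hyp by simp
    qed
  next
    case False
    hence F: "x \<le> t" by simp
    have "f x - f t \<ge> (\<Sum>i<n. (if s!i \<ge> t then -p else 1-p) * (x - t))"
      unfolding fdiff by (rule sum_mono) (rule pin_left[OF p01 F])
    also have "(\<Sum>i<n. (if s!i \<ge> t then -p else 1-p) * (x - t)) = (GE - (real k - 1/2)) * (t - x)"
    proof -
      have Gn: "GE \<le> n" unfolding GE_def by (rule le_trans[OF card_mono[of "{..<n}"]]) auto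
      have "(\<Sum>i<n. (if s!i \<ge> t then -p else 1-p)) = -p * GE + (1-p) * (n - GE)"
        unfolding GE_def by (rule sum_ind)
      also have "\<dots> = real n * (1-p) - GE" using Gn by (simp add: of_nat_diff algebra_simps)
      finally have S: "(\<Sum>i<n. (if s!i \<ge> t then -p else 1-p)) = real k - 1/2 - GE" using np by simp
      have "(\<Sum>i<n. (if s!i \<ge> t then -p else 1-p) * (x - t)) = (\<Sum>i<n. (if s!i \<ge> t then -p else 1-p)) * (x - t)"
        by (simp add: sum_distrib_right)
      also have "\<dots> = (real k - 1/2 - GE) * (x - t)" using S by simp
      also have "\<dots> = (GE - (real k - 1/2)) * (t - x)" by (simp add: field_simps)
      finally show ?thesis .
    qed
    finally have lb: "f x - f t \<ge> (GE - (real k - 1/2)) * (t - x)" .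
    have cg: "g \<le> GE - (real k - 1/2)" using muGE g_def by auto
    show ?thesis
    proof (rule ccontr)
      assume "\<not> ?thesis"
      hence xt: "t - x > gap s k / 2" using F t_def by auto
      have "g * (gap s k / 2) < g * (t - x)" using gp xt by simp
      also have "\<dots> \<le> (GE - (real k - 1/2)) * (t - x)" using cg xt gpos
        by (intro mult_right_mono) auto
      finally show False using lb hyp by simp
    qed
  qed
qed

end
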